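(* Let $\mathbf{A}\in\{0,1\}^{N\times N}$ be the adjacency matrix of a connected simple undirected graph on $N$ nodes whose real sign rank is $3$. For real numbers $k_1,k_1',\dots,k_N,k_N'$ and $x$, let $\mathbf{Z}\in\mathbb{R}^{N\times 3}$ have $i$-th row $(\cos(k_ix)\sin(k_i'x),\ \cos(k_ix)\cos(k_i'x),\ \sin(k_ix))$ and let $\tilde{\mathbf{A}}=\mathbf{Z}\mathbf{Z}^\top$. Then there exist $k_i,k_i'\in\mathbb{R}$ ($i=1,\dots,N$) such that $\operatorname{sign}(A_{ij})=\operatorname{sign}(\tilde A_{ij})$ for all $i\neq j$ (for any fixed nonzero $x$).
   Context: $\operatorname{sign}:\mathbb{R}\to\{+,-\}$ takes the value $-$ on $(-\infty,0]$ and $+$ on $(0,\infty)$, applied entrywise. Graphs have no self-loops and diagonal entries of adjacency matrices are ignored throughout. The real sign rank of a graph with adjacency $\mathbf{A}$ is the minimal $f$ such that there exists $\mathbf{Z}\in\mathbb{R}^{N\times f}$ with $\operatorname{sign}(A_{ij})=\operatorname{sign}((\mathbf{Z}\mathbf{Z}^\top)_{ij})$ for all $i\neq j$. *)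

theory Defs
  imports Complex_Main
begin

text \<open>Vertices of the graph are 0, ..., N-1. Matrices are functions nat => nat => real,
  only the entries with indices below N are relevant.\<close>

datatype sgn_val = Plus | Minus

definition sign :: "real \<Rightarrow> sgn_val" where
  "sign t = (if t > 0 then Plus else Minus)"

definition simple_graph_adj :: "nat \<Rightarrow> (nat \<Rightarrow> nat \<Rightarrow> real) \<Rightarrow> bool" where
  "simple_graph_adj N A \<longleftrightarrow>
     (\<forall>i<N. \<forall>j<N. A i j \<in> {0, 1}) \<and>
     (\<forall>i<N. \<forall>j<N. A i j = A j i) \<and>
     (\<forall>i<N. A i i = 0)"

definition connected_adj :: "nat \<Rightarrow> (nat \<Rightarrow> nat \<Rightarrow> real) \<Rightarrow> bool" where
  "connected_adj N A \<longleftrightarrow>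
     (\<forall>i<N. \<forall>j<N. (\<lambda>u v. u < N \<and> v < N \<and> A u v = 1)\<^sup>*\<^sup>* i j)"

definition sign_realizes :: "nat \<Rightarrow> (nat \<Rightarrow> nat \<Rightarrow> real) \<Rightarrow> nat \<Rightarrow> (nat \<Rightarrow> nat \<Rightarrow> real) \<Rightarrow> bool" where
  "sign_realizes N A f Z \<longleftrightarrow>
     (\<forall>i<N. \<forall>j<N. i \<noteq> j \<longrightarrow> sign (A i j) = sign (\<Sum>l<f. Z i l * Z j l))"

definition real_sign_rank :: "nat \<Rightarrow> (nat \<Rightarrow> nat \<Rightarrow> real) \<Rightarrow> nat" where
  "real_sign_rank N A = (LEAST f. \<exists>Z. sign_realizes N A f Z)"

definition Zpar :: "(nat \<Rightarrow> real) \<Rightarrow> (nat \<Rightarrow> real) \<Rightarrow> real \<Rightarrow> nat \<Rightarrow> nat \<Rightarrow> real" where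
  "Zpar k k' x i l =
     (if l = 0 then cos (k i * x) * sin (k' i * x)
      else if l = 1 then cos (k i * x) * cos (k' i * x)
      else if l = 2 then sin (k i * x) else 0)"

definition Atilde :: "(nat \<Rightarrow> real) \<Rightarrow> (nat \<Rightarrow> real) \<Rightarrow> real \<Rightarrow> nat \<Rightarrow> nat \<Rightarrow> real" where
  "Atilde k k' x i j = (\<Sum>l<3. Zpar k k' x i l * Zpar k k' x j l)"

end

theory Submission imports Defs begin

lemma sphere_param:
  fixes u v w :: real
  assumes r: "r = sqrt (u^2 + v^2 + w^2)" and rpos: "r > 0"
  shows "\<exists>a b. cos a * sin b = u / r \<and> cos a * cos b = v / r \<and> sin a = w / r"
proof -
  define p where "p = u / r"
  define q where "q = v / r"
  define s where "s = w / r"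
  have r2: "r^2 = u^2 + v^2 + w^2" using r by simp
  have "p^2 + q^2 + s^2 = (u^2 + v^2 + w^2) / r^2"
    by (simp add: p_def q_def s_def power_divide add_divide_distrib)
  then have unit: "p^2 + q^2 + s^2 = 1" using rpos r2 by (metis divide_self less_numeral_extra(3) zero_less_power)
  have s2: "s^2 \<le> 1" using unit by (smt (verit) zero_le_power2)
  have sb: "-1 \<le> s" "s \<le> 1" using s2 abs_le_square_iff[of s 1] by auto
  define a where "a = arcsin s"
  have sa: "sin a = s" using sb by (simp add: a_def)
  define c where "c = sqrt (p^2 + q^2)"
  have ca: "cos a = c" unfolding a_def c_def using sb cos_arcsin[of s] unit
    by (smt (verit))
  show ?thesis
  proof (cases "c = 0")
    case True
    then have "p = 0" "q = 0" using c_def by (auto simp: sum_power2_eq_zero_iff)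
    then have "cos a * sin 0 = u / r \<and> cos a * cos 0 = v / r \<and> sin a = w / r"
      using sa ca True by (simp add: p_def q_def s_def)
    then show ?thesis by blast
  next
    case False
    then have cpos: "c > 0" using c_def by (simp add: sum_power2_gt_zero_iff)
    have "(q/c)^2 + (p/c)^2 = 1" using cpos c_def
      by (simp add: power_divide add_divide_distrib[symmetric] sum_power2_gt_zero_iff)
    then obtain t where "q/c = cos t" "p/c = sin t" by (rule sincos_total_2pi)
    then have "cos a * sin t = p" "cos a * cos t = q" using ca cpos by (auto simp: field_simps)
    then show ?thesis using sa by (auto simp: p_def q_def s_def)
  qed
qed

lemma exists_realization:
  assumes g: "simple_graph_adj N A"
  shows "\<exists>f Z. sign_realizes N A f Z"
proof -
  define Z where "Z = (\<lambda>i l. let a = l div N; b = l mod N in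
     (if a < b \<and> i = a then 1::real else if a < b \<and> i = b then (if A a b = 1 then 1 else -1) else 0))"
  have "sign_realizes N A (N*N) Z"
    unfolding sign_realizes_def
  proof (intro allI impI)
    fix i j assume ij: "i < N" "j < N" "i \<noteq> j"
    define a0 where "a0 = min i j"
    define b0 where "b0 = max i j"
    define l0 where "l0 = a0 * N + b0"
    have ab: "a0 < b0" "b0 < N" using ij by (auto simp: a0_def b0_def)
    have l0d: "l0 div N = a0" "l0 mod N = b0" using ab by (auto simp: l0_def)
    have l0N: "l0 < N * N"
    proof -
      have "l0 < a0 * N + N" using ab by (simp add: l0_def)
      also have "\<dots> = (a0 + 1) * N" by simp
      also have "\<dots> \<le> N * N" using ab mult_le_mono1[of "a0 + 1" N N] by linarith
      finally show ?thesis .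
    qed
    have zero: "Z i l * Z j l = 0" if "l < N * N" "l \<noteq> l0" for l
    proof (rule ccontr)
      assume nz: "Z i l * Z j l \<noteq> 0"
      have "l div N < l mod N" using nz by (auto simp: Z_def Let_def split: if_splits)
      moreover have "{l div N, l mod N} = {i, j}"
        using nz ij by (auto simp: Z_def Let_def split: if_splits)
      ultimately have "l div N = a0" "l mod N = b0" unfolding a0_def b0_def
        by (auto simp: doubleton_eq_iff)
      then have "l = l0" unfolding l0_def by (metis div_mult_mod_eq add.commute mult.commute)
      then show False using that by simp
    qed
    have "(\<Sum>l<N*N. Z i l * Z j l) = Z i l0 * Z j l0"
    proof -
      have "(\<Sum>l\<in>{..<N*N} - {l0}. Z i l * Z j l) = 0"
        by (rule sum.neutral) (use zero in auto)
      then show ?thesis using l0N by (subst sum.remove[of _ l0]) auto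
    qed
    also have "\<dots> = (if A i j = 1 then 1 else -1)"
      using ij g l0d ab unfolding Z_def simple_graph_adj_def a0_def b0_def
      by (auto simp: Let_def min_def max_def split: if_splits)
    finally have eq: "(\<Sum>l<N*N. Z i l * Z j l) = (if A i j = 1 then 1 else -1)" .
    have "A i j \<in> {0,1}" using g ij unfolding simple_graph_adj_def by auto
    then show "sign (A i j) = sign (\<Sum>l<N*N. Z i l * Z j l)"
      unfolding eq sign_def by auto
  qed
  then show ?thesis by blast
qed

lemma sum3: "(\<Sum>l<3. g l) = g 0 + g 1 + (g 2 :: real)" for g :: "nat \<Rightarrow> real"
  by (simp add: numeral_3_eq_3 numeral_2_eq_2 lessThan_Suc)

theorem proposition2:
  fixes N :: nat and A :: "nat \<Rightarrow> nat \<Rightarrow> real" and x :: real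
  assumes "simple_graph_adj N A"
    and "connected_adj N A"
    and "real_sign_rank N A = 3"
    and "x \<noteq> 0"
  shows "\<exists>k k' :: nat \<Rightarrow> real. \<forall>i<N. \<forall>j<N. i \<noteq> j \<longrightarrow>
           sign (A i j) = sign (Atilde k k' x i j)"
proof -
  obtain f0 Z0 where "sign_realizes N A f0 Z0" using exists_realization[OF assms(1)] by blast
  then have "\<exists>Z. sign_realizes N A (real_sign_rank N A) Z"
    unfolding real_sign_rank_def using LeastI[of "\<lambda>f. \<exists>Z. sign_realizes N A f Z" f0] by blast
  then obtain Z where Z: "sign_realizes N A 3 Z" using assms(3) by auto
  have Zs: "sign (A i j) = sign (Z i 0 * Z j 0 + Z i 1 * Z j 1 + Z i 2 * Z j 2)"
    if "i < N" "j < N" "i \<noteq> j" for i j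
    using Z that unfolding sign_realizes_def sum3 by blast
  show ?thesis
  proof (cases "N \<le> 1")
    case True
    then show ?thesis by auto
  next
    case False
    define r where "r i = sqrt (Z i 0^2 + Z i 1^2 + Z i 2^2)" for i
    have rpos: "r i > 0" if iN: "i < N" for i
    proof -
      define j where "j = (if i = 0 then 1 else (0::nat))"
      have j: "j < N" "j \<noteq> i" using False iN by (auto simp: j_def)
      have "(\<lambda>u v. u < N \<and> v < N \<and> A u v = 1)\<^sup>*\<^sup>* i j"
        using assms(2) iN j unfolding connected_adj_def by blast
      then obtain u where u: "u < N" "A i u = 1"
        using j(2) by (cases rule: converse_rtranclpE) auto
      have ui: "u \<noteq> i" using u assms(1) iN unfolding simple_graph_adj_def by auto
      have "sign (Z i 0 * Z u 0 + Z i 1 * Z u 1 + Z i 2 * Z u 2) = Plus"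
        using Zs[OF iN u(1) ui[symmetric]] u(2) by (simp add: sign_def)
      then have "Z i 0 * Z u 0 + Z i 1 * Z u 1 + Z i 2 * Z u 2 > 0"
        by (simp add: sign_def split: if_splits)
      then have "\<not> (Z i 0 = 0 \<and> Z i 1 = 0 \<and> Z i 2 = 0)" by auto
      then have "Z i 0^2 + Z i 1^2 + Z i 2^2 > 0"
        by (smt (verit) power2_less_0 power_zero_numeral zero_less_power2)
      then show ?thesis by (simp add: r_def)
    qed
    have "\<forall>i. \<exists>a b. i < N \<longrightarrow> cos a * sin b = Z i 0 / r i \<and> cos a * cos b = Z i 1 / r i \<and> sin a = Z i 2 / r i"
      using sphere_param rpos r_def by blast
    then obtain a b where ab: "\<And>i. i < N \<Longrightarrow> cos (a i) * sin (b i) = Z i 0 / r i \<and> cos (a i) * cos (b i) = Z i 1 / r i \<and> sin (a i) = Z i 2 / r i"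
      by metis
    define k where "k i = a i / x" for i
    define k' where "k' i = b i / x" for i
    have kx: "k i * x = a i" "k' i * x = b i" for i using assms(4) by (auto simp: k_def k'_def)
    have "sign (A i j) = sign (Atilde k k' x i j)" if ij: "i < N" "j < N" "i \<noteq> j" for i j
    proof -
      have ri: "r i > 0" and rj: "r j > 0" using rpos ij by auto
      have e: "Z i 0 = r i * (cos (a i) * sin (b i))" "Z i 1 = r i * (cos (a i) * cos (b i))"
        "Z i 2 = r i * sin (a i)"
        "Z j 0 = r j * (cos (a j) * sin (b j))" "Z j 1 = r j * (cos (a j) * cos (b j))"
        "Z j 2 = r j * sin (a j)"
        using ab[OF ij(1)] ab[OF ij(2)] ri rj by (auto simp: field_simps)
      have "Atilde k k' x i j = (Z i 0 * Z j 0 + Z i 1 * Z j 1 + Z i 2 * Z j 2) / (r i * r j)"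
        unfolding Atilde_def sum3 Zpar_def kx e using ri rj
        by (simp add: field_simps)
      moreover have "r i * r j > 0" using ri rj by simp
      ultimately show ?thesis using Zs[OF ij] by (simp add: sign_def zero_less_divide_iff)
    qed
    then show ?thesis by blast
  qed
qed

end
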